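(* Consider the decentralized setting of the context. Assume that whenever $(j,s)\in\mathcal S^i_t$ one has $|\mathcal S^j_s|<|\mathcal S^i_t|$, that the maximum delay is bounded by $\tau$, and that all loss functions $f^i_t$ are $G$-Lipschitz with respect to $\|\cdot\|$. Then for any $p\in\mathcal X$ with $h(p)\le r^2$, D-DDA with stepsizes \[\eta^i_t=\frac{r}{G\sqrt{(5\tau+3)\big(|\mathcal S^i_t|+(\tau+1)M_{\max}\big)M_{\max}}}\] guarantees a collective regret $R^{g}_T(p)=O\big(\sqrt{\tau N M_{\max}}\big)$, for any choice of reference indices $j_t$.
   Context: Let $\mathcal V$ be a finite-dimensional real vector space with norm $\|\cdot\|$ and dual norm $\|\cdot\|_*$, and $\mathcal X\subset\mathcal V$ closed convex. A regularizer $h:\mathcal V\to\mathbb R\cup\{+\infty\}$ is lower semicontinuous, $1$-strongly convex w.r.t. $\|\cdot\|$ on $\mathcal X$, with $\mathcal X\subset\operatorname{dom}h$, whose subdifferential admits a continuous selection, and $h\ge0$. Decentralized protocol: at each time $t=1,\dots,T$, $M_t\ge1$ agents are active, labelled $1,\dots,M_t$; agent $i$ plays $x^i_t\in\mathcal X$ against a convex loss $f^i_t$ (with $\mathcal X\subset\operatorname{dom}\partial f^i_t$) and the subgradient $g^i_t\in\partial f^i_t(x^i_t)$ is later shared. $\mathcal S^i_t\subset\{(j,s):1\le s\le t-1,\ 1\le j\le M_s\}$ is the set of (agent, time) indices of the feedback used for playing $x^i_t$. D-DDA: $x^i_t=\arg\min_{x\in\mathcal X}\{\sum_{(j,s)\in\mathcal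 S^i_t}\langle g^j_s,x\rangle+h(x)/\eta^i_t\}$. Maximum delay bounded by $\tau$: for all $t$, $i$, every $s\le t-\tau-1$ and $j\le M_s$, $(j,s)\in\mathcal S^i_t$. $M_{\max}=\max_tM_t$, $N=\sum_{t=1}^TM_t$. Collective regret with reference agents $j_t\in\{1,\dots,M_t\}$: $R^{g}_T(p)=\sum_{t=1}^T\sum_{i=1}^{M_t}f^i_t(x^{j_t}_t)-\sum_{t=1}^T\sum_{i=1}^{M_t}f^i_t(p)$. *)

theory Defs
  imports "HOL-Analysis.Analysis"
begin

text \<open>The finite-dimensional real vector space V is modelled by a type of class
  euclidean_space; the inner product is used only as the duality pairing between
  V and its dual (identified with V).  The norm of the problem is an arbitrary
  norm nrm on V, not necessarily the Euclidean one.\<close>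

definition is_norm :: "('v::real_vector \<Rightarrow> real) \<Rightarrow> bool" where
  "is_norm nrm \<longleftrightarrow>
     (\<forall>x. 0 \<le> nrm x) \<and> (\<forall>x. nrm x = 0 \<longleftrightarrow> x = 0) \<and>
     (\<forall>c x. nrm (c *\<^sub>R x) = \<bar>c\<bar> * nrm x) \<and>
     (\<forall>x y. nrm (x + y) \<le> nrm x + nrm y)"

definition lsc :: "('v::topological_space \<Rightarrow> ereal) \<Rightarrow> bool" where
  "lsc h \<longleftrightarrow> (\<forall>x. h x \<le> Liminf (at x) h)"

definition subdiff_e :: "('v::real_inner \<Rightarrow> ereal) \<Rightarrow> 'v \<Rightarrow> 'v set" where
  "subdiff_e h x = {g. \<bar>h x\<bar> \<noteq> \<infinity> \<and> (\<forall>y. h x + ereal (g \<bullet> (y - x)) \<le> h y)}"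

definition subdiff :: "('v::real_inner \<Rightarrow> real) \<Rightarrow> 'v \<Rightarrow> 'v set" where
  "subdiff f x = {g. \<forall>y. f x + g \<bullet> (y - x) \<le> f y}"

definition strongly_convex_on :: "'v::real_vector set \<Rightarrow> ('v \<Rightarrow> real) \<Rightarrow> ('v \<Rightarrow> ereal) \<Rightarrow> bool" where
  "strongly_convex_on X nrm h \<longleftrightarrow>
     (\<forall>x\<in>X. \<forall>y\<in>X. \<forall>a::real. 0 \<le> a \<and> a \<le> 1 \<longrightarrow>
        h (a *\<^sub>R x + (1 - a) *\<^sub>R y)
          \<le> ereal a * h x + ereal (1 - a) * h y
             - ereal (a * (1 - a) / 2 * (nrm (x - y))\<^sup>2))"

definition regularizer :: "'v::euclidean_space set \<Rightarrow> ('v \<Rightarrow> real) \<Rightarrow> ('v \<Rightarrow> ereal) \<Rightarrow> bool" where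
  "regularizer X nrm h \<longleftrightarrow>
     lsc h \<and> strongly_convex_on X nrm h \<and> (\<forall>x\<in>X. h x < \<infinity>) \<and> (\<forall>x. 0 \<le> h x) \<and>
     (\<exists>\<sigma>. continuous_on {x. subdiff_e h x \<noteq> {}} \<sigma> \<and>
          (\<forall>x. subdiff_e h x \<noteq> {} \<longrightarrow> \<sigma> x \<in> subdiff_e h x))"

definition lipschitz_wrt :: "('v::real_vector \<Rightarrow> real) \<Rightarrow> real \<Rightarrow> ('v \<Rightarrow> real) \<Rightarrow> bool" where
  "lipschitz_wrt nrm G f \<longleftrightarrow> (\<forall>x y. \<bar>f x - f y\<bar> \<le> G * nrm (x - y))"

definition Mmax :: "nat \<Rightarrow> (nat \<Rightarrow> nat) \<Rightarrow> nat" where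
  "Mmax T M = Max (M ` {1..T})"

definition Ntot :: "nat \<Rightarrow> (nat \<Rightarrow> nat) \<Rightarrow> nat" where
  "Ntot T M = (\<Sum>t=1..T. M t)"

definition stepsize :: "real \<Rightarrow> real \<Rightarrow> nat \<Rightarrow> nat \<Rightarrow> (nat \<Rightarrow> nat) \<Rightarrow> (nat \<times> nat) set \<Rightarrow> real" where
  "stepsize r G \<tau> T M S' =
     r / (G * sqrt ((5 * real \<tau> + 3) * (real (card S') + (real \<tau> + 1) * real (Mmax T M)) * real (Mmax T M)))"

text \<open>Collective regret with reference agents jt (agent index first, time second).\<close>
definition coll_regret :: "nat \<Rightarrow> (nat \<Rightarrow> nat) \<Rightarrow> (nat \<Rightarrow> nat \<Rightarrow> 'v \<Rightarrow> real) \<Rightarrow> (nat \<Rightarrow> nat \<Rightarrow> 'v)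
     \<Rightarrow> (nat \<Rightarrow> nat) \<Rightarrow> 'v \<Rightarrow> real" where
  "coll_regret T M f x jt p =
     (\<Sum>t=1..T. \<Sum>i=1..M t. f i t (x (jt t) t)) - (\<Sum>t=1..T. \<Sum>i=1..M t. f i t p)"

end

theory Submission
  imports Defs
begin


lemma nrm_neg: assumes "is_norm nrm" shows "nrm (- v) = nrm v"
proof -
  have "nrm ((-1) *\<^sub>R v) = \<bar>-1\<bar> * nrm v" using assms unfolding is_norm_def by blast
  then show ?thesis by simp
qed

lemma nrm_sym: assumes "is_norm nrm" shows "nrm (a - b) = nrm (b - a)"
  using nrm_neg[OF assms, of "a - b"] by simp

lemma nrm_nn: assumes "is_norm nrm" shows "0 \<le> nrm v"
  using assms unfolding is_norm_def by blast

lemma nrm_tri: assumes "is_norm nrm" shows "nrm (a - b) \<le> nrm (a - y) + nrm (b - y)"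
proof -
  have "nrm ((a - y) + (y - b)) \<le> nrm (a - y) + nrm (y - b)" using assms unfolding is_norm_def by blast
  moreover have "nrm (y - b) = nrm (b - y)" by (rule nrm_sym[OF assms])
  ultimately show ?thesis by simp
qed

lemma dual_bound:
  assumes "is_norm nrm" "lipschitz_wrt nrm G f" "g \<in> subdiff f x"
  shows "\<bar>g \<bullet> v\<bar> \<le> G * nrm v"
proof -
  have s: "\<forall>y. f x + g \<bullet> (y - x) \<le> f y" using assms(3) by (simp add: subdiff_def)
  have L: "\<forall>a b. \<bar>f a - f b\<bar> \<le> G * nrm (a - b)" using assms(2) by (simp add: lipschitz_wrt_def)
  have n: "nrm (-v) = nrm v" by (rule nrm_neg[OF assms(1)])
  have "g \<bullet> v \<le> G * nrm v" using s[rule_format, of "x+v"] L[rule_format, of "x+v" x] by auto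
  moreover have "- (g \<bullet> v) \<le> G * nrm v" using s[rule_format, of "x - v"] L[rule_format, of "x - v" x] n
    by (auto simp: inner_diff_right)
  ultimately show ?thesis by linarith
qed

lemma sum_dual:
  assumes "finite A" "\<forall>w\<in>A. \<bar>gg w \<bullet> v\<bar> \<le> B * nv"
  shows "\<bar>(\<Sum>w\<in>A. gg w) \<bullet> v\<bar> \<le> real (card A) * B * nv"
proof -
  have "\<bar>(\<Sum>w\<in>A. gg w) \<bullet> v\<bar> = \<bar>\<Sum>w\<in>A. gg w \<bullet> v\<bar>" by (simp add: inner_sum_left)
  also have "\<dots> \<le> (\<Sum>w\<in>A. \<bar>gg w \<bullet> v\<bar>)" by (rule sum_abs)
  also have "\<dots> \<le> (\<Sum>w\<in>A. B * nv)" by (rule sum_mono) (use assms in auto)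
  also have "\<dots> = real (card A) * B * nv" by simp
  finally show ?thesis .
qed

lemma mid_sc:
  assumes "regularizer X nrm h" "x\<in>X" "y\<in>X"
  shows "real_of_ereal (h ((1/2) *\<^sub>R x + (1/2) *\<^sub>R y)) \<le> real_of_ereal (h x)/2 + real_of_ereal (h y)/2 - (nrm (x - y))\<^sup>2/8"
proof -
  have sc: "strongly_convex_on X nrm h" and fin: "\<forall>x\<in>X. h x < \<infinity>" and nn: "\<forall>x. 0 \<le> h x"
    using assms(1) unfolding regularizer_def by auto
  have hx: "h x = ereal (real_of_ereal (h x))" using fin nn assms(2) by (metis ereal_real ereal_infty_less_eq(1) abs_ereal_ge0 less_ereal.simps(2) not_less_iff_gr_or_eq)
  have hy: "h y = ereal (real_of_ereal (h y))" using fin nn assms(3) by (metis ereal_real ereal_infty_less_eq(1) abs_ereal_ge0 less_ereal.simps(2) not_less_iff_gr_or_eq)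
  have "h ((1/2) *\<^sub>R x + (1 - 1/2) *\<^sub>R y) \<le> ereal (1/2) * h x + ereal (1 - 1/2) * h y - ereal (1/2 * (1 - 1/2) / 2 * (nrm (x - y))\<^sup>2)"
    using sc[unfolded strongly_convex_on_def, rule_format, of x y "1/2"] assms(2,3) by simp
  then have 1: "h ((1/2) *\<^sub>R x + (1/2) *\<^sub>R y) \<le> ereal (real_of_ereal (h x)/2 + real_of_ereal (h y)/2 - (nrm (x - y))\<^sup>2/8)"
    by (subst (asm) hx, subst (asm) hy) simp
  have m0: "0 \<le> h ((1/2) *\<^sub>R x + (1/2) *\<^sub>R y)" using nn by blast
  obtain m where m: "h ((1/2) *\<^sub>R x + (1/2) *\<^sub>R y) = ereal m" using 1 m0
    by (cases "h ((1/2) *\<^sub>R x + (1/2) *\<^sub>R y)") auto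
  show ?thesis using 1 m by simp
qed



lemma growth:
  fixes \<theta> :: "'v::real_inner"
  assumes cvx: "convex X"
    and SC: "\<forall>x\<in>X. \<forall>y\<in>X. H ((1/2) *\<^sub>R x + (1/2) *\<^sub>R y) \<le> H x/2 + H y/2 - (nrm (x - y))\<^sup>2/8"
    and b: "0 < \<beta>" and y: "y \<in> X" and x: "x \<in> X"
    and mn: "\<forall>z\<in>X. \<theta> \<bullet> y + H y / \<beta> \<le> \<theta> \<bullet> z + H z / \<beta> + \<epsilon>"
  shows "\<theta> \<bullet> y + H y / \<beta> - 2*\<epsilon> + (nrm (x - y))\<^sup>2/(4*\<beta>) \<le> \<theta> \<bullet> x + H x / \<beta>"
proof -
  let ?m = "(1/2) *\<^sub>R x + (1/2) *\<^sub>R y"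
  have m: "?m \<in> X" using cvx x y unfolding convex_def by auto
  have 1: "\<theta> \<bullet> y + H y/\<beta> \<le> \<theta> \<bullet> ?m + H ?m/\<beta> + \<epsilon>" using mn m by blast
  have 2: "\<theta> \<bullet> ?m = \<theta>\<bullet>x/2 + \<theta>\<bullet>y/2" by (simp add: inner_add_right)
  have 3: "H ?m / \<beta> \<le> (H x/2 + H y/2 - (nrm (x-y))\<^sup>2/8)/\<beta>" using SC x y b by (simp add: divide_right_mono)
  have 4: "(H x/2 + H y/2 - (nrm (x-y))\<^sup>2/8)/\<beta> = (H x/\<beta>)/2 + (H y/\<beta>)/2 - ((nrm(x-y))\<^sup>2/(4*\<beta>))/2"
    using b by (simp add: field_simps)
  define A where "A = \<theta> \<bullet> x" define B where "B = \<theta> \<bullet> y"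
  define C where "C = H x / \<beta>" define E where "E = H y / \<beta>"
  define Q where "Q = (nrm (x-y))\<^sup>2/(4*\<beta>)"
  have "B + E \<le> A/2 + B/2 + (C/2 + E/2 - Q/2) + \<epsilon>" using 1 2 3 4 unfolding A_def B_def C_def E_def Q_def by linarith
  then have "B + E - 2*\<epsilon> + Q \<le> A + C" by linarith
  then show ?thesis by (simp only: A_def B_def C_def E_def Q_def)
qed

lemma quad: "0 < (\<beta>::real) \<Longrightarrow> - (a\<^sup>2 * \<beta>) \<le> d\<^sup>2/(4*\<beta>) - a*d"
proof -
  assume b: "0 < \<beta>"
  have "0 \<le> (d - 2*a*\<beta>)\<^sup>2/(4*\<beta>)" using b by simp
  also have "(d - 2*a*\<beta>)\<^sup>2/(4*\<beta>) = d\<^sup>2/(4*\<beta>) - a*d + a\<^sup>2 * \<beta>"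
    using b by (simp add: field_simps power2_eq_square)
  finally show ?thesis by simp
qed

lemma bdd_F:
  fixes \<theta> :: "'v::real_inner"
  assumes cvx: "convex X"
    and SC: "\<forall>x\<in>X. \<forall>y\<in>X. H ((1/2) *\<^sub>R x + (1/2) *\<^sub>R y) \<le> H x/2 + H y/2 - (nrm (x - y))\<^sup>2/8"
    and b: "0 < \<beta>" and x0: "x0 \<in> X" and z: "z \<in> X" and Hnn: "\<forall>x. 0 \<le> H x"
    and dual: "\<forall>v. \<bar>\<theta> \<bullet> v\<bar> \<le> a * nrm v"
  shows "\<theta> \<bullet> x0 - H x0/\<beta> - a\<^sup>2*\<beta> \<le> \<theta> \<bullet> z + H z/\<beta>"
proof -
  let ?d = "nrm (z - x0)"
  have "0 \<le> H ((1/2) *\<^sub>R z + (1/2) *\<^sub>R x0)" using Hnn by blast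
  then have h1: "?d\<^sup>2/4 - H x0 \<le> H z" using SC z x0 by fastforce
  have h2: "(?d\<^sup>2/4 - H x0)/\<beta> \<le> H z/\<beta>" using h1 b by (simp add: divide_right_mono)
  have h3: "(?d\<^sup>2/4 - H x0)/\<beta> = ?d\<^sup>2/(4*\<beta>) - H x0/\<beta>" using b by (simp add: field_simps)
  have "\<theta> \<bullet> z = \<theta> \<bullet> x0 + \<theta> \<bullet> (z - x0)" by (simp add: inner_diff_right)
  moreover have "- (a * ?d) \<le> \<theta> \<bullet> (z - x0)" using dual[rule_format, of "z - x0"] by linarith
  moreover have "- (a\<^sup>2 * \<beta>) \<le> ?d\<^sup>2/(4*\<beta>) - a*?d" by (rule quad[OF b])
  ultimately show ?thesis using h2 h3 by linarith
qed

lemma approx_min: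
  fixes F :: "'a \<Rightarrow> real"
  assumes "X \<noteq> {}" "\<forall>z\<in>X. lb \<le> F z" "0 < \<epsilon>"
  shows "\<exists>y\<in>X. \<forall>z\<in>X. F y \<le> F z + \<epsilon>"
proof -
  have bdd: "bdd_below (F ` X)" using assms(2) by (auto intro: bdd_belowI)
  have "Inf (F ` X) < Inf (F ` X) + \<epsilon>" using assms(3) by simp
  then obtain y where y: "y \<in> X" "F y < Inf (F`X) + \<epsilon>" using cInf_lessD[of "F`X"] assms(1) by force
  moreover have "\<forall>z\<in>X. Inf (F`X) \<le> F z" using bdd by (auto intro: cInf_lower)
  ultimately show ?thesis by force
qed

lemma dist_min:
  fixes a b :: "'v::real_inner"
  assumes cvx: "convex X"
    and SC: "\<forall>x\<in>X. \<forall>y\<in>X. H ((1/2) *\<^sub>R x + (1/2) *\<^sub>R y) \<le> H x/2 + H y/2 - (nrm (x - y))\<^sup>2/8"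
    and x1: "x1 \<in> X" and y: "y \<in> X"
    and A: "\<forall>z\<in>X. a \<bullet> x1 + H x1 \<le> a \<bullet> z + H z"
    and B: "\<forall>z\<in>X. b \<bullet> y + H y \<le> b \<bullet> z + H z + e"
    and D: "\<forall>v. \<bar>(a - b) \<bullet> v\<bar> \<le> D * nrm v" and D0: "0 \<le> D" and e0: "0 \<le> e"
    and sym: "nrm (y - x1) = nrm (x1 - y)" and d0: "0 \<le> nrm (x1 - y)"
  shows "nrm (x1 - y) \<le> 2*D + 2 * sqrt e"
proof -
  let ?d = "nrm (x1 - y)"
  have g1: "a \<bullet> x1 + H x1 / 1 - 2*0 + (nrm (y - x1))\<^sup>2/(4*1) \<le> a \<bullet> y + H y / 1"
    by (rule growth[OF cvx SC _ x1 y]) (use A in auto)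
  have g2: "b \<bullet> y + H y / 1 - 2*e + (nrm (x1 - y))\<^sup>2/(4*1) \<le> b \<bullet> x1 + H x1 / 1"
    by (rule growth[OF cvx SC _ y x1]) (use B in auto)
  have "(a - b) \<bullet> (y - x1) = a \<bullet> y - a \<bullet> x1 - b \<bullet> y + b \<bullet> x1"
    by (simp add: inner_diff_left inner_diff_right)
  moreover have "(a - b) \<bullet> (y - x1) \<le> D * ?d" using D[rule_format, of "y - x1", unfolded sym] by linarith
  ultimately have q: "?d\<^sup>2 \<le> 2*D*?d + 4*e" using g1 g2 sym by simp
  show ?thesis
  proof (rule ccontr)
    assume "\<not> ?thesis"
    then have c: "2*D + 2 * sqrt e < ?d" by simp
    have se: "0 \<le> sqrt e" using e0 by simp
    have dpos: "0 < ?d" using c D0 se by linarith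
    have "?d * (2*D + 2 * sqrt e) < ?d * ?d" using mult_strict_left_mono[OF c dpos] .
    then have "?d * (2*D) + ?d * (2 * sqrt e) < ?d * ?d" by (simp add: distrib_left)
    moreover have "2 * sqrt e * (2 * sqrt e) \<le> ?d * (2 * sqrt e)" using c D0 se
      by (intro mult_right_mono) auto
    moreover have "2 * sqrt e * (2 * sqrt e) = 4*e" using e0 by (simp add: power2_eq_square[symmetric])
    ultimately show False using q by (simp add: power2_eq_square algebra_simps)
  qed
qed

lemma sqrt_step:
  fixes n m c :: real
  assumes "0 \<le> n" "0 \<le> m" "m \<le> c"
  shows "m / sqrt (n + c) \<le> 2 * (sqrt (n + m) - sqrt n)"
proof (cases "m = 0")
  case True then show ?thesis by simp
next
  case False
  then have mp: "0 < m" using assms by simp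
  have a: "m / sqrt (n + c) \<le> m / sqrt (n + m)"
    using assms mp by (intro divide_left_mono) auto
  have s1: "sqrt n \<le> sqrt (n + m)" using assms by simp
  have s2: "0 < sqrt (n + m)" using assms mp by simp
  have "m = (sqrt (n + m) - sqrt n) * (sqrt (n + m) + sqrt n)"
    using assms by (simp add: algebra_simps)
  also have "\<dots> \<le> (sqrt (n + m) - sqrt n) * (2 * sqrt (n + m))"
    using s1 by (intro mult_left_mono) auto
  finally have "m \<le> 2 * (sqrt (n + m) - sqrt n) * sqrt (n + m)" by (simp add: algebra_simps)
  then have "m / sqrt (n + m) \<le> 2 * (sqrt (n + m) - sqrt n)"
    using s2 by (simp add: pos_divide_le_eq)
  then show ?thesis using a by linarith
qed

lemma sum_sqrt:
  fixes m :: "nat \<Rightarrow> real"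
  assumes "\<forall>t\<in>{1..T}. 0 \<le> m t \<and> m t \<le> c"
  shows "(\<Sum>t=1..T. m t / sqrt ((\<Sum>s\<in>{1..<t}. m s) + c)) \<le> 2 * sqrt (\<Sum>s=1..T. m s)"
  using assms
proof (induction T)
  case 0 then show ?case by simp
next
  case (Suc T)
  have IH: "(\<Sum>t=1..T. m t / sqrt ((\<Sum>s\<in>{1..<t}. m s) + c)) \<le> 2 * sqrt (\<Sum>s=1..T. m s)"
    using Suc by auto
  have n0: "0 \<le> (\<Sum>s=1..T. m s)" using Suc.prems by (intro sum_nonneg) auto
  have e: "{1..<Suc T} = {1..T}" by auto
  have st: "m (Suc T) / sqrt ((\<Sum>s=1..T. m s) + c) \<le> 2 * (sqrt ((\<Sum>s=1..T. m s) + m (Suc T)) - sqrt (\<Sum>s=1..T. m s))"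
    using Suc.prems n0 by (intro sqrt_step) auto
  have s1: "(\<Sum>t=1..Suc T. f t) = (\<Sum>t=1..T. f t) + f (Suc T)" for f :: "nat \<Rightarrow> real"
    by (simp add: sum.cl_ivl_Suc)
  show ?case unfolding s1 e using IH st by (simp add: algebra_simps)
qed



lemma PA_eq: "{(j,s). s \<in> A \<and> 1 \<le> j \<and> j \<le> (M::nat\<Rightarrow>nat) s} = (\<lambda>(s,j). (j,s)) ` (SIGMA s:A. {1..M s})"
  by (auto simp: image_iff)

lemma finite_PA: "finite A \<Longrightarrow> finite {(j,s). s \<in> A \<and> 1 \<le> j \<and> j \<le> (M::nat\<Rightarrow>nat) s}"
  unfolding PA_eq by auto

lemma card_PA: "finite A \<Longrightarrow> card {(j,s). s \<in> A \<and> 1 \<le> j \<and> j \<le> (M::nat\<Rightarrow>nat) s} = (\<Sum>s\<in>A. M s)"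
proof -
  assume A: "finite A"
  have "inj_on (\<lambda>(s,j). (j::nat,s::nat)) (SIGMA s:A. {1..M s})" by (auto simp: inj_on_def)
  then have "card {(j,s). s \<in> A \<and> 1 \<le> j \<and> j \<le> M s} = card (SIGMA s:A. {1..M s})"
    unfolding PA_eq by (rule card_image)
  also have "\<dots> = (\<Sum>s\<in>A. card {1..M s})" using A by simp
  finally show ?thesis by simp
qed

lemma sum_PA:
  fixes g :: "nat \<Rightarrow> nat \<Rightarrow> 'a::comm_monoid_add"
  shows "finite A \<Longrightarrow> (\<Sum>(j,s)\<in>{(j,s). s \<in> A \<and> 1 \<le> j \<and> j \<le> (M::nat\<Rightarrow>nat) s}. g j s) = (\<Sum>s\<in>A. \<Sum>j\<in>{1..M s}. g j s)"
proof -
  assume A: "finite A"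
  have inj: "inj_on (\<lambda>(s,j). (j::nat,s::nat)) (SIGMA s:A. {1..M s})" by (auto simp: inj_on_def)
  have "(\<Sum>(j,s)\<in>{(j,s). s \<in> A \<and> 1 \<le> j \<and> j \<le> M s}. g j s) = (\<Sum>(s,j)\<in>(SIGMA s:A. {1..M s}). g j s)"
    unfolding PA_eq by (subst sum.reindex[OF inj]) (simp add: comp_def split_beta)
  also have "\<dots> = (\<Sum>s\<in>A. \<Sum>j\<in>{1..M s}. g j s)" using A by (simp add: sum.Sigma)
  finally show ?thesis .
qed

lemma inner_sum_pairs: "(\<Sum>(j,s)\<in>A. g j s \<bullet> z) = (\<Sum>(j,s)\<in>A. g j s) \<bullet> (z::'v::real_inner)"
  by (simp add: inner_sum_left split_def)



lemma keyineq:
  fixes \<sigma> n c :: real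
  assumes s0: "0 \<le> \<sigma>" and sn: "\<sigma> \<le> n" and c0: "0 < c"
  shows "\<sigma> * (1 / sqrt (\<sigma> + c) - 1 / sqrt (n + c)) \<le> (n - \<sigma>) / sqrt (n + c)"
proof -
  define a where "a = sqrt (\<sigma> + c)"
  define b where "b = sqrt (n + c)"
  have a0: "0 < a" using s0 c0 by (simp add: a_def)
  have ab: "a \<le> b" using sn by (simp add: a_def b_def)
  have b0: "0 < b" using a0 ab by simp
  have a2: "a * a = \<sigma> + c" using s0 c0 by (simp add: a_def)
  have b2: "b * b = n + c" using s0 sn c0 by (simp add: b_def)
  have e1: "1/a - 1/b = (b - a)/(a*b)" using a0 b0 by (simp add: field_simps)
  have q0: "0 \<le> (b - a)/(a*b)" using ab a0 b0 by simp
  have "\<sigma> * ((b-a)/(a*b)) \<le> (a*a) * ((b-a)/(a*b))" using a2 c0 q0 by (intro mult_right_mono) auto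
  also have "(a*a) * ((b-a)/(a*b)) = a*(b-a)/b" using a0 b0 by (simp add: field_simps)
  also have "a*(b-a)/b \<le> (b+a)*(b-a)/b" using ab b0 a0 by (intro divide_right_mono mult_right_mono) auto
  also have "(b+a)*(b-a) = n - \<sigma>" using a2 b2 by (simp add: algebra_simps)
  finally show ?thesis using e1 by (simp add: a_def b_def)
qed

lemma main:
  fixes X :: "'v::euclidean_space set" and nrm :: "'v \<Rightarrow> real" and h :: "'v \<Rightarrow> ereal"
    and T :: nat and M :: "nat \<Rightarrow> nat" and S :: "nat \<Rightarrow> nat \<Rightarrow> (nat \<times> nat) set"
    and x :: "nat \<Rightarrow> nat \<Rightarrow> 'v" and f :: "nat \<Rightarrow> nat \<Rightarrow> 'v \<Rightarrow> real" and g :: "nat \<Rightarrow> nat \<Rightarrow> 'v"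
    and G r :: real and \<tau> :: nat and p :: 'v and jt :: "nat \<Rightarrow> nat"
  assumes cvx: "convex X" and nrm: "is_norm nrm" and reg: "regularizer X nrm h"
    and M1: "\<forall>t\<in>{1..T}. 1 \<le> M t"
    and Ssub: "\<forall>t\<in>{1..T}. \<forall>i\<in>{1..M t}. S i t \<subseteq> {(j, s). 1 \<le> s \<and> s \<le> t - 1 \<and> 1 \<le> j \<and> j \<le> M s}"
    and G: "0 < G"
    and fl: "\<forall>t\<in>{1..T}. \<forall>i\<in>{1..M t}. convex_on UNIV (f i t) \<and> lipschitz_wrt nrm G (f i t)
                                  \<and> g i t \<in> subdiff (f i t) (x i t)"
    and r: "0 < r"
    and dda: "\<forall>t\<in>{1..T}. \<forall>i\<in>{1..M t}. x i t \<in> X \<and>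
            (\<forall>y\<in>X. (\<Sum>(j, s)\<in>S i t. g j s \<bullet> x i t)
                       + real_of_ereal (h (x i t)) / stepsize r G \<tau> T M (S i t)
                    \<le> (\<Sum>(j, s)\<in>S i t. g j s \<bullet> y)
                       + real_of_ereal (h y) / stepsize r G \<tau> T M (S i t))"
    and delay: "\<forall>t\<in>{1..T}. \<forall>i\<in>{1..M t}. \<forall>s. 1 \<le> s \<and> s + \<tau> + 1 \<le> t \<longrightarrow>
            (\<forall>j\<in>{1..M s}. (j, s) \<in> S i t)"
    and pX: "p \<in> X" and hp: "h p \<le> ereal (r\<^sup>2)"
    and jt: "\<forall>t\<in>{1..T}. jt t \<in> {1..M t}"
  shows "coll_regret T M f x jt p \<le> 50 * r * G * sqrt ((real \<tau> + 1) * real (Ntot T M) * real (Mmax T M))"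
proof (cases "T = 0")
  case True then show ?thesis by (simp add: coll_regret_def Ntot_def)
next
  case False
  then have T1: "1 \<le> T" by simp
  define H where "H = (\<lambda>z. real_of_ereal (h z))"
  have Hnn: "\<forall>z. 0 \<le> H z" unfolding H_def using reg by (simp add: regularizer_def real_of_ereal_pos)
  have SC: "\<forall>a\<in>X. \<forall>b\<in>X. H ((1/2) *\<^sub>R a + (1/2) *\<^sub>R b) \<le> H a/2 + H b/2 - (nrm (a - b))\<^sup>2/8"
    unfolding H_def using mid_sc[OF reg] by blast
  have Hp: "H p \<le> r\<^sup>2"
  proof -
    have "0 \<le> h p" using reg by (simp add: regularizer_def)
    then show ?thesis using hp unfolding H_def by (cases "h p") auto
  qed
  define Mm where "Mm = Mmax T M"
  define N where "N = Ntot T M"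
  have Mm_ge: "\<And>t. t\<in>{1..T} \<Longrightarrow> M t \<le> Mm" unfolding Mm_def Mmax_def by auto
  have Mm_in: "Mm \<in> M ` {1..T}" unfolding Mm_def Mmax_def using T1 by (intro Max_in) auto
  have Mm1: "1 \<le> Mm" using Mm_in M1 by auto
  have MmN: "Mm \<le> N"
  proof -
    obtain t0 where t0: "t0 \<in> {1..T}" "Mm = M t0" using Mm_in by auto
    have "M t0 \<le> (\<Sum>t=1..T. M t)" using t0(1) by (intro member_le_sum) auto
    then show ?thesis using t0 by (simp add: N_def Ntot_def)
  qed
  define c where "c = (real \<tau> + 1) * real Mm"
  define K where "K = (5 * real \<tau> + 3) * real Mm"
  have Mm1r: "(1::real) \<le> real Mm" using Mm1 by simp
  have c1: "1 \<le> c" unfolding c_def using mult_mono[OF _ Mm1r, of 1 "real \<tau> + 1"] by simp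
  have cK: "c \<le> K" using Mm1 by (simp add: c_def K_def)
  have K5c: "K \<le> 5 * c" using Mm1 by (simp add: c_def K_def algebra_simps)
  have Kpos: "0 < K" using c1 cK by simp
  define eta where "eta = (\<lambda>n::real. r / (G * sqrt ((5 * real \<tau> + 3) * (n + c) * real Mm)))"
  have step_eq: "\<And>A. stepsize r G \<tau> T M A = eta (real (card A))"
    unfolding stepsize_def eta_def c_def Mm_def by simp
  define \<kappa> where "\<kappa> = r / (G * sqrt K)"
  have \<kappa>pos: "0 < \<kappa>" using r G Kpos by (simp add: \<kappa>_def)
  have eta_alt: "\<And>n. 0 \<le> n \<Longrightarrow> eta n = \<kappa> / sqrt (n + c)"
  proof -
    fix n :: real assume "0 \<le> n"
    have "(5 * real \<tau> + 3) * (n + c) * real Mm = K * (n + c)" by (simp add: K_def algebra_simps)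
    then have e: "sqrt ((5 * real \<tau> + 3) * (n + c) * real Mm) = sqrt K * sqrt (n + c)"
      by (simp only: real_sqrt_mult)
    have "eta n = r / (G * (sqrt K * sqrt (n + c)))" by (simp only: eta_def e)
    also have "\<dots> = \<kappa> / sqrt (n + c)" by (simp add: \<kappa>_def)
    finally show "eta n = \<kappa> / sqrt (n + c)" .
  qed
  have eta_pos: "\<And>n. 0 \<le> n \<Longrightarrow> 0 < eta n" using eta_alt \<kappa>pos c1 by simp
  have eta_anti: "\<And>a b. 0 \<le> a \<Longrightarrow> a \<le> b \<Longrightarrow> eta b \<le> eta a"
  proof -
    fix a b :: real assume ab: "0 \<le> a" "a \<le> b"
    have "\<kappa> / sqrt (b + c) \<le> \<kappa> / sqrt (a + c)" using ab c1 \<kappa>pos by (intro divide_left_mono) auto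
    then show "eta b \<le> eta a" using eta_alt ab by simp
  qed
  have etaG: "\<And>n. 0 \<le> n \<Longrightarrow> G * eta n = r / (sqrt K * sqrt (n + c))"
    using eta_alt G by (simp add: \<kappa>_def)
  define P where "P = (\<lambda>t::nat. {(j, s). s \<in> {1..<t} \<and> 1 \<le> j \<and> j \<le> M s})"
  have finP: "\<And>t. finite (P t)" unfolding P_def by (rule finite_PA) simp
  have cardP: "\<And>t. card (P t) = (\<Sum>s\<in>{1..<t}. M s)" unfolding P_def by (rule card_PA) simp
  have dual: "\<And>t i v. t\<in>{1..T} \<Longrightarrow> i\<in>{1..M t} \<Longrightarrow> \<bar>g i t \<bullet> v\<bar> \<le> G * nrm v"
    using fl dual_bound[OF nrm] by blast
  have dualP: "\<And>t w v. t \<le> Suc T \<Longrightarrow> w \<in> P t \<Longrightarrow> \<bar>case_prod g w \<bullet> v\<bar> \<le> G * nrm v"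
  proof -
    fix t w v assume a: "t \<le> Suc T" "w \<in> P t"
    obtain j s where w: "w = (j, s)" by fastforce
    have "s \<in> {1..T}" "j \<in> {1..M s}" using a w unfolding P_def by auto
    then show "\<bar>case_prod g w \<bullet> v\<bar> \<le> G * nrm v" using dual w by simp
  qed
  have SsubP: "\<And>t i. t\<in>{1..T} \<Longrightarrow> i\<in>{1..M t} \<Longrightarrow> S i t \<subseteq> P t"
  proof -
    fix t i assume a: "t\<in>{1..T}" "i\<in>{1..M t}"
    then show "S i t \<subseteq> P t" using Ssub unfolding P_def by fastforce
  qed
  have finS: "\<And>t i. t\<in>{1..T} \<Longrightarrow> i\<in>{1..M t} \<Longrightarrow> finite (S i t)"
    using SsubP finP finite_subset by blast
  have cardPN: "\<And>t. t \<le> Suc T \<Longrightarrow> card (P t) \<le> N"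
  proof -
    fix t :: nat assume "t \<le> Suc T"
    then have "{1..<t} \<subseteq> {1..T}" by auto
    then have "(\<Sum>s\<in>{1..<t}. M s) \<le> (\<Sum>s\<in>{1..T}. M s)" by (intro sum_mono2) auto
    then show "card (P t) \<le> N" by (simp add: cardP N_def Ntot_def)
  qed
  have cardPT: "card (P (Suc T)) = N"
  proof -
    have "{1..<Suc T} = {1..T}" by auto
    then show ?thesis by (simp add: cardP N_def Ntot_def)
  qed
  have diffcard: "\<And>t i. t\<in>{1..T} \<Longrightarrow> i\<in>{1..M t} \<Longrightarrow> real (card (P t - S i t)) \<le> real \<tau> * real Mm"
  proof -
    fix t i assume a: "t\<in>{1..T}" "i\<in>{1..M t}"
    define A where "A = {s. 1 \<le> s \<and> s < t \<and> t \<le> s + \<tau>}"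
    have AT: "A \<subseteq> {t - \<tau>..<t}" unfolding A_def by auto
    have finA: "finite A" using AT finite_subset by blast
    have cA: "card A \<le> \<tau>" using card_mono[OF _ AT] by simp
    have sub: "P t - S i t \<subseteq> {(j,s). s \<in> A \<and> 1 \<le> j \<and> j \<le> M s}"
    proof
      fix w assume w: "w \<in> P t - S i t"
      obtain j s where ws: "w = (j, s)" by fastforce
      have "1 \<le> s" "s < t" "1 \<le> j" "j \<le> M s" "(j,s) \<notin> S i t" using w ws unfolding P_def by auto
      moreover have "t \<le> s + \<tau>"
      proof (rule ccontr)
        assume "\<not> t \<le> s + \<tau>"
        then have "s + \<tau> + 1 \<le> t" by simp
        then have "(j,s) \<in> S i t" using delay a \<open>1 \<le> s\<close> \<open>1 \<le> j\<close> \<open>j \<le> M s\<close> by auto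
        then show False using \<open>(j,s) \<notin> S i t\<close> by simp
      qed
      ultimately show "w \<in> {(j,s). s \<in> A \<and> 1 \<le> j \<and> j \<le> M s}" using ws unfolding A_def by simp
    qed
    have "card (P t - S i t) \<le> card {(j,s). s \<in> A \<and> 1 \<le> j \<and> j \<le> M s}"
      by (rule card_mono[OF finite_PA[OF finA] sub])
    also have "\<dots> = (\<Sum>s\<in>A. M s)" by (rule card_PA[OF finA])
    also have "\<dots> \<le> (\<Sum>s\<in>A. Mm)" using a by (intro sum_mono Mm_ge) (auto simp: A_def)
    also have "\<dots> = card A * Mm" by simp
    also have "\<dots> \<le> \<tau> * Mm" using cA by simp
    finally have "card (P t - S i t) \<le> \<tau> * Mm" .
    then show "real (card (P t - S i t)) \<le> real \<tau> * real Mm" by (metis of_nat_le_iff of_nat_mult)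
  qed
  define \<Theta> where "\<Theta> = (\<lambda>i t. \<Sum>(j,s)\<in>S i t. g j s)"
  define \<sigma> where "\<sigma> = (\<lambda>i t. real (card (S i t)))"
  define \<eta> where "\<eta> = (\<lambda>i t. eta (\<sigma> i t))"
  have \<sigma>0: "\<And>i t. 0 \<le> \<sigma> i t" by (simp add: \<sigma>_def)
  have \<eta>pos: "\<And>i t. 0 < \<eta> i t" by (simp add: \<eta>_def eta_pos \<sigma>0)
  have \<Theta>dual: "\<And>t i v. t\<in>{1..T} \<Longrightarrow> i\<in>{1..M t} \<Longrightarrow> \<bar>\<Theta> i t \<bullet> v\<bar> \<le> \<sigma> i t * G * nrm v"
  proof -
    fix t i v assume a: "t\<in>{1..T}" "i\<in>{1..M t}"
    have "\<forall>w\<in>S i t. \<bar>case_prod g w \<bullet> v\<bar> \<le> G * nrm v"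
    proof
      fix w assume w: "w \<in> S i t"
      have tT: "t \<le> Suc T" using a by simp
      show "\<bar>case_prod g w \<bullet> v\<bar> \<le> G * nrm v" by (rule dualP[OF tT]) (use w SsubP[OF a] in blast)
    qed
    from sum_dual[OF finS[OF a] this] show "\<bar>\<Theta> i t \<bullet> v\<bar> \<le> \<sigma> i t * G * nrm v"
      by (simp add: \<Theta>_def \<sigma>_def split_def)
  qed
  have xopt: "\<And>t i. t\<in>{1..T} \<Longrightarrow> i\<in>{1..M t} \<Longrightarrow> x i t \<in> X \<and>
       (\<forall>z\<in>X. (\<eta> i t *\<^sub>R \<Theta> i t) \<bullet> x i t + H (x i t) \<le> (\<eta> i t *\<^sub>R \<Theta> i t) \<bullet> z + H z)"
  proof -
    fix t i assume a: "t\<in>{1..T}" "i\<in>{1..M t}"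
    have d: "x i t \<in> X \<and> (\<forall>z\<in>X. \<Theta> i t \<bullet> x i t + H (x i t) / \<eta> i t \<le> \<Theta> i t \<bullet> z + H z / \<eta> i t)"
      using dda a unfolding step_eq inner_sum_pairs \<Theta>_def \<eta>_def \<sigma>_def H_def by blast
    have "\<forall>z\<in>X. (\<eta> i t *\<^sub>R \<Theta> i t) \<bullet> x i t + H (x i t) \<le> (\<eta> i t *\<^sub>R \<Theta> i t) \<bullet> z + H z"
    proof
      fix z assume z: "z \<in> X"
      have "\<eta> i t * (\<Theta> i t \<bullet> x i t + H (x i t) / \<eta> i t) \<le> \<eta> i t * (\<Theta> i t \<bullet> z + H z / \<eta> i t)"
        using d z \<eta>pos[of i t] by (intro mult_left_mono) auto
      then show "(\<eta> i t *\<^sub>R \<Theta> i t) \<bullet> x i t + H (x i t) \<le> (\<eta> i t *\<^sub>R \<Theta> i t) \<bullet> z + H z"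
        using \<eta>pos[of i t] by (simp add: distrib_left)
    qed
    then show "?thesis t i" using d by blast
  qed
  have R_eq: "coll_regret T M f x jt p = (\<Sum>t=1..T. \<Sum>i=1..M t. (f i t (x (jt t) t) - f i t p))"
    by (simp add: coll_regret_def sum_subtractf)
  have Nreal: "real N = (\<Sum>t=1..T. real (M t))" by (simp add: N_def Ntot_def)
  have tgt: "(real \<tau> + 1) * real (Ntot T M) * real (Mmax T M) = c * real N"
    by (simp add: c_def N_def Mm_def)
  show ?thesis
  proof (cases "real N < c")
    case True
    have dist_p: "nrm (x k t - p) \<le> 5*r" if a: "t\<in>{1..T}" "k\<in>{1..M t}" for t k
    proof -
      let ?\<theta> = "\<eta> k t *\<^sub>R \<Theta> k t"
      let ?d = "nrm (p - x k t)"
      have xk: "x k t \<in> X" using xopt[OF a] by blast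
      have g1: "?\<theta> \<bullet> x k t + H (x k t) / 1 - 2*0 + ?d\<^sup>2/(4*1) \<le> ?\<theta> \<bullet> p + H p / 1"
        by (rule growth[OF cvx SC _ xk pX]) (use xopt[OF a] in auto)
      have d0: "0 \<le> ?d" by (rule nrm_nn[OF nrm])
      have \<sigma>N: "\<sigma> k t \<le> real N"
      proof -
        have "card (S k t) \<le> card (P t)" using SsubP[OF a] finP by (rule card_mono[rotated])
        also have "\<dots> \<le> N" using a by (intro cardPN) auto
        finally show ?thesis by (simp add: \<sigma>_def)
      qed
      have \<eta>\<sigma>G: "\<eta> k t * \<sigma> k t * G \<le> r"
      proof -
        have sK: "\<sigma> k t \<le> K" using \<sigma>N True cK by linarith
        have "\<sigma> k t * \<sigma> k t \<le> K * (\<sigma> k t + c)"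
          using sK \<sigma>0[of k t] c1 Kpos by (smt (verit) mult_mono mult_nonneg_nonneg)
        then have "sqrt (\<sigma> k t * \<sigma> k t) \<le> sqrt (K * (\<sigma> k t + c))" by (rule real_sqrt_le_mono)
        then have q: "\<sigma> k t \<le> sqrt K * sqrt (\<sigma> k t + c)" using \<sigma>0[of k t] by (simp add: real_sqrt_mult)
        have pos: "0 < sqrt K * sqrt (\<sigma> k t + c)" using Kpos c1 \<sigma>0[of k t] by simp
        have "\<eta> k t * \<sigma> k t * G = \<sigma> k t * (G * eta (\<sigma> k t))" by (simp add: \<eta>_def)
        also have "\<dots> = r * (\<sigma> k t / (sqrt K * sqrt (\<sigma> k t + c)))" using etaG[OF \<sigma>0[of k t]] by simp
        also have "\<dots> \<le> r * 1" using q pos r by (intro mult_left_mono) (auto simp: divide_le_eq)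
        finally show ?thesis by simp
      qed
      have "\<bar>?\<theta> \<bullet> (p - x k t)\<bar> = \<eta> k t * \<bar>\<Theta> k t \<bullet> (p - x k t)\<bar>" using \<eta>pos[of k t] by (simp add: abs_mult)
      also have "\<dots> \<le> \<eta> k t * (\<sigma> k t * G * ?d)" using \<Theta>dual[OF a] \<eta>pos[of k t] by (intro mult_left_mono) auto
      also have "\<dots> = (\<eta> k t * \<sigma> k t * G) * ?d" by simp
      also have "\<dots> \<le> r * ?d" using \<eta>\<sigma>G d0 by (intro mult_right_mono) auto
      finally have lin: "?\<theta> \<bullet> p - ?\<theta> \<bullet> x k t \<le> r * ?d" by (simp add: inner_diff_right)
      have Hx: "0 \<le> H (x k t)" using Hnn by blast
      have q: "?d * ?d \<le> 4 * r * ?d + 4 * r\<^sup>2" using g1 lin Hx Hp by (simp add: power2_eq_square)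
      have "?d \<le> 5 * r"
      proof (rule ccontr)
        assume "\<not> ?d \<le> 5 * r"
        then have c5: "5 * r < ?d" by simp
        have "?d * (5 * r) < ?d * ?d" using c5 r by (intro mult_strict_left_mono) auto
        then have h1: "5 * (r * ?d) < ?d * ?d" by (simp add: algebra_simps)
        have "r * (5 * r) \<le> r * ?d" using c5 r by (intro mult_left_mono) auto
        then have h2: "5 * (r * r) \<le> r * ?d" by (simp add: algebra_simps)
        have q': "?d * ?d \<le> 4 * (r * ?d) + 4 * (r * r)" using q by (simp add: power2_eq_square algebra_simps)
        have "0 < r * r" using r by simp
        then show False using h1 h2 q' by linarith
      qed
      then show ?thesis using nrm_sym[OF nrm, of p "x k t"] by simp
    qed
    have trm: "f i t (x (jt t) t) - f i t p \<le> 5 * r * G" if a: "t\<in>{1..T}" "i\<in>{1..M t}" for t i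
    proof -
      have "\<bar>f i t (x (jt t) t) - f i t p\<bar> \<le> G * nrm (x (jt t) t - p)"
        using fl a unfolding lipschitz_wrt_def by blast
      also have "\<dots> \<le> G * (5 * r)" using dist_p[OF a(1)] jt a G by (intro mult_left_mono) auto
      finally show ?thesis by (simp add: abs_le_iff algebra_simps)
    qed
    have "coll_regret T M f x jt p \<le> (\<Sum>t=1..T. \<Sum>i=1..M t. 5 * r * G)"
      unfolding R_eq by (intro sum_mono trm) auto
    also have "\<dots> = 5 * r * G * real N" by (simp add: Nreal sum_distrib_left mult.commute)
    also have "\<dots> \<le> 50 * r * G * sqrt (c * real N)"
    proof -
      have "real N * real N \<le> c * real N" using True by (intro mult_right_mono) auto
      then have "sqrt (real N * real N) \<le> sqrt (c * real N)" by (rule real_sqrt_le_mono)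
      then have "real N \<le> sqrt (c * real N)" by simp
      then have "5 * r * G * real N \<le> 5 * r * G * sqrt (c * real N)" using r G by simp
      moreover have "0 \<le> r * G * sqrt (c * real N)" using r G c1 by simp
      ultimately show ?thesis by linarith
    qed
    finally show ?thesis unfolding tgt .
  next
    case False
    then have cN: "c \<le> real N" by simp
    define L where "L = (\<lambda>t. \<Sum>(j,s)\<in>P t. g j s)"
    define l where "l = (\<lambda>t. \<Sum>i\<in>{1..M t}. g i t)"
    define nP where "nP = (\<lambda>t. real (card (P t)))"
    define \<beta> where "\<beta> = (\<lambda>t. eta (nP t))"
    define \<epsilon> where "\<epsilon> = (\<lambda>t. G\<^sup>2 * \<beta> t)"
    define F where "F = (\<lambda>t z. L t \<bullet> z + H z / \<beta> t)"
    have nP0: "\<And>t. 0 \<le> nP t" by (simp add: nP_def)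
    have \<beta>pos: "\<And>t. 0 < \<beta> t" by (simp add: \<beta>_def eta_pos nP0)
    have \<epsilon>pos: "\<And>t. 0 < \<epsilon> t" using G \<beta>pos by (simp add: \<epsilon>_def)
    have \<beta>anti: "\<And>t. \<beta> (Suc t) \<le> \<beta> t"
    proof -
      fix t
      have "P t \<subseteq> P (Suc t)" unfolding P_def by auto
      then have "card (P t) \<le> card (P (Suc t))" using finP by (intro card_mono) auto
      then show "\<beta> (Suc t) \<le> \<beta> t" unfolding \<beta>_def nP_def by (intro eta_anti) auto
    qed
    have Lsum: "\<And>t. L t = (\<Sum>s\<in>{1..<t}. l s)" unfolding L_def l_def P_def by (rule sum_PA) simp
    have L1: "L (Suc 0) = 0" by (simp add: Lsum)
    have LSuc: "\<And>t. 1 \<le> t \<Longrightarrow> L (Suc t) = L t + l t" by (simp add: Lsum)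
    have LT: "L (Suc T) = (\<Sum>t=1..T. l t)"
    proof -
      have "{1..<Suc T} = {1..T}" by auto
      then show ?thesis by (simp add: Lsum)
    qed
    have dualL: "\<And>t v. t \<le> Suc T \<Longrightarrow> \<bar>L t \<bullet> v\<bar> \<le> nP t * G * nrm v"
    proof -
      fix t v assume a: "t \<le> Suc T"
      have "\<forall>w\<in>P t. \<bar>case_prod g w \<bullet> v\<bar> \<le> G * nrm v" using dualP a by blast
      from sum_dual[OF finP this] show "\<bar>L t \<bullet> v\<bar> \<le> nP t * G * nrm v"
        by (simp add: L_def nP_def split_def)
    qed
    have duall: "\<And>t v. t\<in>{1..T} \<Longrightarrow> \<bar>l t \<bullet> v\<bar> \<le> real (M t) * G * nrm v"
    proof -
      fix t v assume a: "t\<in>{1..T}"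
      have "\<forall>i\<in>{1..M t}. \<bar>g i t \<bullet> v\<bar> \<le> G * nrm v" using dual a by blast
      from sum_dual[OF _ this] show "\<bar>l t \<bullet> v\<bar> \<le> real (M t) * G * nrm v"
        by (simp add: l_def)
    qed
    have yex: "\<forall>t\<in>{1..T}. \<exists>y\<in>X. \<forall>z\<in>X. F t y \<le> F t z + \<epsilon> t"
    proof
      fix t assume a: "t\<in>{1..T}"
      have lb: "\<forall>z\<in>X. L t \<bullet> p - H p/\<beta> t - (nP t * G)\<^sup>2 * \<beta> t \<le> F t z"
      proof
        fix z assume z: "z \<in> X"
        have "\<forall>v. \<bar>L t \<bullet> v\<bar> \<le> (nP t * G) * nrm v" using dualL a by auto
        from bdd_F[OF cvx SC \<beta>pos pX z Hnn this] show "L t \<bullet> p - H p/\<beta> t - (nP t * G)\<^sup>2 * \<beta> t \<le> F t z"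
          by (simp add: F_def)
      qed
      show "\<exists>y\<in>X. \<forall>z\<in>X. F t y \<le> F t z + \<epsilon> t"
        by (rule approx_min[OF _ lb \<epsilon>pos]) (use pX in auto)
    qed
    obtain y where y: "\<forall>t\<in>{1..T}. y t \<in> X \<and> (\<forall>z\<in>X. F t (y t) \<le> F t z + \<epsilon> t)"
      using bchoice[OF yex[unfolded Bex_def]] by auto
    have step: "F t (y t) + l t \<bullet> y t - (2 * \<epsilon> t + \<beta> t * (real (M t) * G)\<^sup>2) \<le> F (Suc t) z"
      if a: "t\<in>{1..T}" and z: "z\<in>X" for t z
    proof -
      have yt: "y t \<in> X" using y a by blast
      let ?d = "nrm (z - y t)"
      have gr: "L t \<bullet> y t + H (y t) / \<beta> t - 2 * \<epsilon> t + ?d\<^sup>2/(4 * \<beta> t) \<le> L t \<bullet> z + H z / \<beta> t"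
        by (rule growth[OF cvx SC \<beta>pos yt z]) (use y a in \<open>auto simp: F_def\<close>)
      have "\<bar>l t \<bullet> (z - y t)\<bar> \<le> real (M t) * G * ?d" by (rule duall[OF a])
      then have li: "l t \<bullet> y t - real (M t) * G * ?d \<le> l t \<bullet> z" by (simp add: inner_diff_right)
      have qd: "- ((real (M t) * G)\<^sup>2 * \<beta> t) \<le> ?d\<^sup>2/(4 * \<beta> t) - (real (M t) * G) * ?d"
        by (rule quad[OF \<beta>pos])
      have Hb: "H z / \<beta> t \<le> H z / \<beta> (Suc t)"
        using Hnn \<beta>pos \<beta>anti by (intro divide_left_mono) (auto intro: mult_pos_pos)
      have FS: "F (Suc t) z = L t \<bullet> z + l t \<bullet> z + H z / \<beta> (Suc t)"
        using a by (simp add: F_def LSuc inner_add_left)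
      have Ft: "F t (y t) = L t \<bullet> y t + H (y t) / \<beta> t" by (simp add: F_def)
      show ?thesis using gr li qd Hb FS Ft by (simp add: algebra_simps)
    qed
    define e where "e = (\<lambda>t. 2 * \<epsilon> t + \<beta> t * (real (M t) * G)\<^sup>2)"
    have tele: "\<forall>z\<in>X. (\<Sum>t=1..k. l t \<bullet> y t - e t) \<le> F (Suc k) z" if "k \<le> T" for k
      using that
    proof (induction k)
      case 0
      show ?case
      proof
        fix z assume "z \<in> X"
        have "0 \<le> H z / \<beta> (Suc 0)" using Hnn[rule_format, of z] \<beta>pos[of "Suc 0"] by simp
        then show "(\<Sum>t=1..0. l t \<bullet> y t - e t) \<le> F (Suc 0) z" by (simp add: F_def L1)
      qed
    next
      case (Suc k)
      have yk: "y (Suc k) \<in> X" using y Suc.prems by auto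
      have IH: "(\<Sum>t=1..k. l t \<bullet> y t - e t) \<le> F (Suc k) (y (Suc k))" using Suc yk by auto
      show ?case
      proof
        fix z assume z: "z \<in> X"
        have "F (Suc k) (y (Suc k)) + l (Suc k) \<bullet> y (Suc k) - e (Suc k) \<le> F (Suc (Suc k)) z"
          unfolding e_def by (rule step) (use Suc.prems z in auto)
        then show "(\<Sum>t=1..Suc k. l t \<bullet> y t - e t) \<le> F (Suc (Suc k)) z" using IH by simp
      qed
    qed
    have ftrl: "(\<Sum>t=1..T. l t \<bullet> (y t - p)) \<le> r\<^sup>2 / \<beta> (Suc T) + (\<Sum>t=1..T. e t)"
    proof -
      have a: "(\<Sum>t=1..T. l t \<bullet> y t - e t) \<le> F (Suc T) p" using tele[of T] pX by auto
      have b: "F (Suc T) p = (\<Sum>t=1..T. l t \<bullet> p) + H p / \<beta> (Suc T)"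
        by (simp add: F_def LT inner_sum_left)
      have c: "H p / \<beta> (Suc T) \<le> r\<^sup>2 / \<beta> (Suc T)" using Hp \<beta>pos by (intro divide_right_mono) (auto intro: less_imp_le)
      have d: "(\<Sum>t=1..T. l t \<bullet> (y t - p)) = (\<Sum>t=1..T. l t \<bullet> y t) - (\<Sum>t=1..T. l t \<bullet> p)"
        by (simp add: inner_diff_right sum_subtractf)
      have e': "(\<Sum>t=1..T. l t \<bullet> y t - e t) = (\<Sum>t=1..T. l t \<bullet> y t) - (\<Sum>t=1..T. e t)"
        by (simp add: sum_subtractf)
      show ?thesis using a b c d e' by linarith
    qed
    define \<delta> where "\<delta> = (\<lambda>t. (4 * real \<tau> * real Mm + 2) * G * \<beta> t)"
    have distB: "nrm (x i t - y t) \<le> \<delta> t" if a: "t\<in>{1..T}" "i\<in>{1..M t}" for t i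
    proof -
      have yt: "y t \<in> X" and Fy: "\<forall>z\<in>X. F t (y t) \<le> F t z + \<epsilon> t" using y a by auto
      have xi: "x i t \<in> X" and A: "\<forall>z\<in>X. (\<eta> i t *\<^sub>R \<Theta> i t) \<bullet> x i t + H (x i t) \<le> (\<eta> i t *\<^sub>R \<Theta> i t) \<bullet> z + H z"
        using xopt[OF a] by auto
      have B: "\<forall>z\<in>X. (\<beta> t *\<^sub>R L t) \<bullet> y t + H (y t) \<le> (\<beta> t *\<^sub>R L t) \<bullet> z + H z + \<beta> t * \<epsilon> t"
      proof
        fix z assume z: "z \<in> X"
        have "\<beta> t * F t (y t) \<le> \<beta> t * (F t z + \<epsilon> t)"
          using Fy z \<beta>pos[of t] by (intro mult_left_mono) auto
        then show "(\<beta> t *\<^sub>R L t) \<bullet> y t + H (y t) \<le> (\<beta> t *\<^sub>R L t) \<bullet> z + H z + \<beta> t * \<epsilon> t"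
          using \<beta>pos[of t] by (simp add: F_def distrib_left)
      qed
      define \<Delta> where "\<Delta> = (\<Sum>(j,s)\<in>P t - S i t. g j s)"
      have Ldec: "L t = \<Delta> + \<Theta> i t"
        unfolding L_def \<Delta>_def \<Theta>_def by (rule sum.subset_diff[OF SsubP[OF a] finP])
      have tT: "t \<le> Suc T" using a by simp
      have \<Delta>dual: "\<bar>\<Delta> \<bullet> v\<bar> \<le> real \<tau> * real Mm * G * nrm v" for v
      proof -
        have "\<forall>w\<in>P t - S i t. \<bar>case_prod g w \<bullet> v\<bar> \<le> G * nrm v" using dualP[OF tT] by blast
        from sum_dual[OF _ this] have "\<bar>\<Delta> \<bullet> v\<bar> \<le> real (card (P t - S i t)) * G * nrm v"
          using finP by (simp add: \<Delta>_def split_def)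
        also have "\<dots> \<le> real \<tau> * real Mm * G * nrm v"
          using diffcard[OF a] G nrm_nn[OF nrm, of v] by (intro mult_right_mono) auto
        finally show ?thesis .
      qed
      have cS: "card (S i t) \<le> card (P t)" using SsubP[OF a] finP by (rule card_mono[rotated])
      have sn: "\<sigma> i t \<le> nP t" using cS by (simp add: \<sigma>_def nP_def)
      have nsd: "nP t - \<sigma> i t \<le> real \<tau> * real Mm"
      proof -
        have "card (P t - S i t) = card (P t) - card (S i t)"
          using card_Diff_subset[OF finS[OF a] SsubP[OF a]] .
        then have "real (card (P t - S i t)) = nP t - \<sigma> i t" using cS by (simp add: nP_def \<sigma>_def of_nat_diff)
        then show ?thesis using diffcard[OF a] by simp
      qed
      have \<eta>t: "\<eta> i t = \<kappa> / sqrt (\<sigma> i t + c)" by (simp add: \<eta>_def eta_alt \<sigma>0)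
      have \<beta>t: "\<beta> t = \<kappa> / sqrt (nP t + c)" by (simp add: \<beta>_def eta_alt nP0)
      have \<beta>\<eta>: "\<beta> t \<le> \<eta> i t" unfolding \<beta>_def \<eta>_def using sn \<sigma>0 by (intro eta_anti) auto
      have key: "(\<eta> i t - \<beta> t) * \<sigma> i t \<le> real \<tau> * real Mm * \<beta> t"
      proof -
        have "(\<eta> i t - \<beta> t) * \<sigma> i t = \<kappa> * (\<sigma> i t * (1 / sqrt (\<sigma> i t + c) - 1 / sqrt (nP t + c)))"
          by (simp add: \<eta>t \<beta>t algebra_simps)
        also have "\<dots> \<le> \<kappa> * ((nP t - \<sigma> i t) / sqrt (nP t + c))"
          using keyineq[OF \<sigma>0 sn, of c] c1 \<kappa>pos by (intro mult_left_mono) auto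
        also have "\<dots> = (nP t - \<sigma> i t) * \<beta> t" by (simp add: \<beta>t)
        also have "\<dots> \<le> real \<tau> * real Mm * \<beta> t" using nsd \<beta>pos[of t] by (intro mult_right_mono) auto
        finally show ?thesis .
      qed
      have Ddual: "\<forall>v. \<bar>(\<eta> i t *\<^sub>R \<Theta> i t - \<beta> t *\<^sub>R L t) \<bullet> v\<bar> \<le> (2 * real \<tau> * real Mm * G * \<beta> t) * nrm v"
      proof
        fix v
        let ?nv = "nrm v"
        have nv0: "0 \<le> ?nv" by (rule nrm_nn[OF nrm])
        have eq: "(\<eta> i t *\<^sub>R \<Theta> i t - \<beta> t *\<^sub>R L t) \<bullet> v = (\<eta> i t - \<beta> t) * (\<Theta> i t \<bullet> v) - \<beta> t * (\<Delta> \<bullet> v)"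
          by (simp add: Ldec inner_diff_left inner_add_left algebra_simps)
        have t1: "\<bar>(\<eta> i t - \<beta> t) * (\<Theta> i t \<bullet> v)\<bar> \<le> real \<tau> * real Mm * \<beta> t * G * ?nv"
        proof -
          have "\<bar>(\<eta> i t - \<beta> t) * (\<Theta> i t \<bullet> v)\<bar> = (\<eta> i t - \<beta> t) * \<bar>\<Theta> i t \<bullet> v\<bar>"
            using \<beta>\<eta> by (simp add: abs_mult)
          also have "\<dots> \<le> (\<eta> i t - \<beta> t) * (\<sigma> i t * G * ?nv)"
            using \<Theta>dual[OF a] \<beta>\<eta> by (intro mult_left_mono) auto
          also have "\<dots> = ((\<eta> i t - \<beta> t) * \<sigma> i t) * (G * ?nv)" by simp
          also have "\<dots> \<le> (real \<tau> * real Mm * \<beta> t) * (G * ?nv)"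
            using key G nv0 by (intro mult_right_mono) auto
          finally show ?thesis by simp
        qed
        have t2: "\<bar>\<beta> t * (\<Delta> \<bullet> v)\<bar> \<le> \<beta> t * (real \<tau> * real Mm * G * ?nv)"
          using \<Delta>dual[of v] \<beta>pos[of t] by (simp add: abs_mult)
        show "\<bar>(\<eta> i t *\<^sub>R \<Theta> i t - \<beta> t *\<^sub>R L t) \<bullet> v\<bar> \<le> (2 * real \<tau> * real Mm * G * \<beta> t) * ?nv"
          using t1 t2 unfolding eq by (simp add: algebra_simps abs_le_iff) linarith?
      qed
      have D0: "0 \<le> 2 * real \<tau> * real Mm * G * \<beta> t" using G \<beta>pos[of t] by simp
      have e0: "0 \<le> \<beta> t * \<epsilon> t" using \<beta>pos[of t] \<epsilon>pos[of t] by simp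
      have dm: "nrm (x i t - y t) \<le> 2 * (2 * real \<tau> * real Mm * G * \<beta> t) + 2 * sqrt (\<beta> t * \<epsilon> t)"
        by (rule dist_min[OF cvx SC xi yt A B Ddual D0 e0 nrm_sym[OF nrm] nrm_nn[OF nrm]])
      have "\<beta> t * \<epsilon> t = (G * \<beta> t)\<^sup>2" by (simp add: \<epsilon>_def power2_eq_square)
      then have "sqrt (\<beta> t * \<epsilon> t) = G * \<beta> t" using G \<beta>pos[of t] by simp
      then show ?thesis using dm by (simp add: \<delta>_def algebra_simps)
    qed
    have \<delta>0: "\<And>t. 0 \<le> \<delta> t" using G \<beta>pos by (simp add: \<delta>_def less_imp_le)
    have termB: "f i t (x (jt t) t) - f i t p \<le> g i t \<bullet> (y t - p) + 3 * (G * \<delta> t)"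
      if a: "t\<in>{1..T}" "i\<in>{1..M t}" for t i
    proof -
      have jta: "jt t \<in> {1..M t}" using jt a by blast
      have lip: "\<bar>f i t (x (jt t) t) - f i t (x i t)\<bar> \<le> G * nrm (x (jt t) t - x i t)"
        using fl a unfolding lipschitz_wrt_def by blast
      have tri: "nrm (x (jt t) t - x i t) \<le> nrm (x (jt t) t - y t) + nrm (x i t - y t)" by (rule nrm_tri[OF nrm])
      have sg: "f i t (x i t) + g i t \<bullet> (p - x i t) \<le> f i t p" using fl a unfolding subdiff_def by blast
      have gd: "\<bar>g i t \<bullet> (x i t - y t)\<bar> \<le> G * nrm (x i t - y t)" by (rule dual[OF a])
      have d1: "nrm (x (jt t) t - y t) \<le> \<delta> t" by (rule distB[OF a(1) jta])
      have d2: "nrm (x i t - y t) \<le> \<delta> t" by (rule distB[OF a])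
      have "G * nrm (x (jt t) t - x i t) \<le> G * (\<delta> t + \<delta> t)" using tri d1 d2 G by (intro mult_left_mono) auto
      moreover have "G * nrm (x i t - y t) \<le> G * \<delta> t" using d2 G by (intro mult_left_mono) auto
      moreover have "g i t \<bullet> (p - x i t) = g i t \<bullet> (p - y t) - g i t \<bullet> (x i t - y t)" by (simp add: inner_diff_right)
      moreover have "g i t \<bullet> (y t - p) = - (g i t \<bullet> (p - y t))" by (simp add: inner_diff_right)
      ultimately show ?thesis using lip sg gd by (simp add: algebra_simps abs_le_iff) linarith?
    qed
    have R1: "coll_regret T M f x jt p \<le> (\<Sum>t=1..T. l t \<bullet> (y t - p)) + (\<Sum>t=1..T. real (M t) * (3 * (G * \<delta> t)))"
    proof -
      have "coll_regret T M f x jt p \<le> (\<Sum>t=1..T. \<Sum>i=1..M t. g i t \<bullet> (y t - p) + 3 * (G * \<delta> t))"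
        unfolding R_eq by (intro sum_mono termB) auto
      also have "\<dots> = (\<Sum>t=1..T. l t \<bullet> (y t - p) + real (M t) * (3 * (G * \<delta> t)))"
        by (simp add: sum.distrib l_def inner_sum_left)
      finally show ?thesis by (simp add: sum.distrib)
    qed
    have pert: "e t + real (M t) * (3 * (G * \<delta> t)) \<le> (G * (G * \<beta> t)) * (21 * c * real (M t))"
      if a: "t\<in>{1..T}" for t
    proof -
      define m where "m = real (M t)"
      define u where "u = G * (G * \<beta> t)"
      have u0: "0 \<le> u" using G \<beta>pos[of t] by (simp add: u_def)
      have m1: "1 \<le> m" using M1 a by (simp add: m_def)
      have mM: "m \<le> real Mm" using Mm_ge[OF a] by (simp add: m_def)
      have eq: "e t + real (M t) * (3 * (G * \<delta> t)) = u * (2 + m*m + 3*m*(4*real \<tau>*real Mm + 2))"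
        by (simp add: e_def \<epsilon>_def \<delta>_def u_def m_def power2_eq_square algebra_simps)
      have f1: "m * m \<le> real Mm * m" using mM m1 by (intro mult_right_mono) auto
      have f2: "1 \<le> real Mm * m" using Mm1r m1 mult_mono[OF Mm1r m1] by simp
      have f3: "m \<le> real Mm * m" using Mm1r m1 by (simp add: mult_right_mono[OF Mm1r, of m, simplified])
      have f4: "0 \<le> real \<tau> * (real Mm * m)" using m1 by simp
      have poly: "2 + m*m + 3*m*(4*real \<tau>*real Mm + 2) \<le> 21 * c * m"
      proof -
        have "2 + m*m + 3*m*(4*real \<tau>*real Mm + 2) = 2 + m*m + 12 * (real \<tau> * (real Mm * m)) + 6*m"
          by (simp add: algebra_simps)
        also have "\<dots> \<le> 21 * (real \<tau> * (real Mm * m)) + 21 * (real Mm * m)" using f1 f2 f3 f4 by linarith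
        also have "\<dots> = 21 * c * m" by (simp add: c_def algebra_simps)
        finally show ?thesis .
      qed
      have "u * (2 + m*m + 3*m*(4*real \<tau>*real Mm + 2)) \<le> u * (21 * c * m)" using poly u0 by (rule mult_left_mono)
      then show ?thesis using eq by (simp only: u_def m_def)
    qed
    have nPsum: "\<And>t. nP t = (\<Sum>s\<in>{1..<t}. real (M s))" by (simp add: nP_def cardP)
    have ss: "(\<Sum>t=1..T. (G * \<beta> t) * real (M t)) \<le> r / sqrt K * (2 * sqrt (real N))"
    proof -
      have "(\<Sum>t=1..T. (G * \<beta> t) * real (M t)) = r / sqrt K * (\<Sum>t=1..T. real (M t) / sqrt ((\<Sum>s\<in>{1..<t}. real (M s)) + c))"
      proof -
        have pw: "(G * \<beta> t) * real (M t) = r / sqrt K * (real (M t) / sqrt ((\<Sum>s\<in>{1..<t}. real (M s)) + c))" for t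
        proof -
          have "G * \<beta> t = r / (sqrt K * sqrt (nP t + c))" unfolding \<beta>_def by (rule etaG[OF nP0])
          then show ?thesis using nPsum[of t] by simp
        qed
        show ?thesis by (simp only: pw sum_distrib_left)
      qed
      also have "\<dots> \<le> r / sqrt K * (2 * sqrt (\<Sum>s=1..T. real (M s)))"
      proof (intro mult_left_mono sum_sqrt)
        show "\<forall>t\<in>{1..T}. 0 \<le> real (M t) \<and> real (M t) \<le> c"
        proof
          fix t assume a: "t \<in> {1..T}"
          have "real (M t) \<le> real Mm" using Mm_ge[OF a] by simp
          also have "real Mm \<le> c" using Mm1r by (simp add: c_def)
          finally show "0 \<le> real (M t) \<and> real (M t) \<le> c" by simp
        qed
        show "0 \<le> r / sqrt K" using r Kpos by simp
      qed
      finally show ?thesis by (simp add: Nreal)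
    qed
    have cK': "c / sqrt K \<le> sqrt c"
    proof -
      have sK: "0 < sqrt K" using Kpos by simp
      have "c = sqrt c * sqrt c" using c1 by simp
      also have "\<dots> \<le> sqrt c * sqrt K" using cK c1 by (intro mult_left_mono) auto
      finally show ?thesis using sK by (simp add: divide_le_eq)
    qed
    have part2: "(\<Sum>t=1..T. e t) + (\<Sum>t=1..T. real (M t) * (3 * (G * \<delta> t))) \<le> 42 * r * G * sqrt (c * real N)"
    proof -
      have "(\<Sum>t=1..T. e t) + (\<Sum>t=1..T. real (M t) * (3 * (G * \<delta> t)))
            = (\<Sum>t=1..T. e t + real (M t) * (3 * (G * \<delta> t)))" by (simp add: sum.distrib)
      also have "\<dots> \<le> (\<Sum>t=1..T. (G * (G * \<beta> t)) * (21 * c * real (M t)))" by (intro sum_mono pert) auto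
      also have "\<dots> = (21 * c * G) * (\<Sum>t=1..T. (G * \<beta> t) * real (M t))"
        by (simp add: sum_distrib_left algebra_simps)
      also have "\<dots> \<le> (21 * c * G) * (r / sqrt K * (2 * sqrt (real N)))"
        using ss c1 G by (intro mult_left_mono) auto
      also have "\<dots> = 42 * r * G * (c / sqrt K) * sqrt (real N)" by (simp add: algebra_simps)
      also have "\<dots> \<le> 42 * r * G * sqrt c * sqrt (real N)"
        using cK' r G by (intro mult_right_mono mult_left_mono) auto
      also have "\<dots> = 42 * r * G * sqrt (c * real N)" by (simp add: real_sqrt_mult)
      finally show ?thesis .
    qed
    have part1: "r\<^sup>2 / \<beta> (Suc T) \<le> 4 * r * G * sqrt (c * real N)"
    proof -
      have bT: "\<beta> (Suc T) = \<kappa> / sqrt (real N + c)" by (simp add: \<beta>_def nP_def cardPT eta_alt)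
      have sK: "0 < sqrt K" using Kpos by simp
      have sN: "0 < sqrt (real N + c)" using c1 by (simp add: add_nonneg_pos)
      have "r\<^sup>2 / \<beta> (Suc T) = r * G * (sqrt K * sqrt (real N + c))"
        using r G sK sN by (simp add: bT \<kappa>_def field_simps power2_eq_square)
      also have "\<dots> \<le> r * G * (4 * sqrt (c * real N))"
      proof -
        have "K * (real N + c) \<le> (5 * c) * (2 * real N)"
          using K5c cN c1 Kpos by (intro mult_mono) auto
        also have "\<dots> \<le> 16 * (c * real N)" using c1 cN by simp
        finally have "sqrt (K * (real N + c)) \<le> sqrt (16 * (c * real N))" by (rule real_sqrt_le_mono)
        then have "sqrt K * sqrt (real N + c) \<le> 4 * sqrt (c * real N)"
          by (simp add: real_sqrt_mult)
        then show ?thesis using r G by (intro mult_left_mono) auto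
      qed
      finally show ?thesis by simp
    qed
    have "coll_regret T M f x jt p \<le> 46 * r * G * sqrt (c * real N)"
      using R1 ftrl part1 part2 by linarith
    also have "\<dots> \<le> 50 * r * G * sqrt (c * real N)"
      using r G c1 by (intro mult_right_mono) auto
    finally show ?thesis unfolding tgt .
  qed
qed



theorem theorem4:
  "\<exists>C::real. \<forall>(X::'v::euclidean_space set) nrm h T M S x f g G r \<tau> p jt.
     ( closed X \<and> convex X \<and> is_norm nrm \<and> regularizer X nrm h
       \<and> (\<forall>t\<in>{1..T}. 1 \<le> M t)
       \<comment> \<open>feedback sets consist of earlier (agent,time) indices\<close>
       \<and> (\<forall>t\<in>{1..T}. \<forall>i\<in>{1..M t}.
            S i t \<subseteq> {(j, s). 1 \<le> s \<and> s \<le> t - 1 \<and> 1 \<le> j \<and> j \<le> M s})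
       \<comment> \<open>convex G-Lipschitz losses and shared subgradients\<close>
       \<and> 0 < G
       \<and> (\<forall>t\<in>{1..T}. \<forall>i\<in>{1..M t}. convex_on UNIV (f i t) \<and> lipschitz_wrt nrm G (f i t)
                                  \<and> g i t \<in> subdiff (f i t) (x i t))
       \<comment> \<open>D-DDA with the prescribed stepsizes\<close>
       \<and> 0 < r
       \<and> (\<forall>t\<in>{1..T}. \<forall>i\<in>{1..M t}. x i t \<in> X \<and>
            (\<forall>y\<in>X. (\<Sum>(j, s)\<in>S i t. g j s \<bullet> x i t)
                       + real_of_ereal (h (x i t)) / stepsize r G \<tau> T M (S i t)
                    \<le> (\<Sum>(j, s)\<in>S i t. g j s \<bullet> y)
                       + real_of_ereal (h y) / stepsize r G \<tau> T M (S i t)))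
       \<comment> \<open>feedback sets strictly grow along the information flow\<close>
       \<and> (\<forall>t\<in>{1..T}. \<forall>i\<in>{1..M t}. \<forall>(j, s)\<in>S i t. card (S j s) < card (S i t))
       \<comment> \<open>maximum delay bounded by tau\<close>
       \<and> (\<forall>t\<in>{1..T}. \<forall>i\<in>{1..M t}. \<forall>s. 1 \<le> s \<and> s + \<tau> + 1 \<le> t \<longrightarrow>
            (\<forall>j\<in>{1..M s}. (j, s) \<in> S i t))
       \<comment> \<open>comparator and reference agents\<close>
       \<and> p \<in> X \<and> h p \<le> ereal (r\<^sup>2)
       \<and> (\<forall>t\<in>{1..T}. jt t \<in> {1..M t}) )
     \<longrightarrow> coll_regret T M f x jt p
           \<le> C * r * G * sqrt ((real \<tau> + 1) * real (Ntot T M) * real (Mmax T M))"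
  apply (rule exI[of _ 50])
  apply (intro allI impI)
  apply (elim conjE)
  apply (rule main)
                apply assumption+
  done

end
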